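(* Let $n\in\mathbb{N}$, $1<p<q$, and $0<\omega<\omega_{p,q}$, where $$\omega_{p,q}=\frac{2(q-p)}{(p+1)(q-1)}\left[\frac{(p-1)(q+1)}{(p+1)(q-1)}\right]^{\frac{p-1}{q-p}}.$$ Let $f(u)=-\omega u+u^p-u^q$, $F(u)=\int_0^u f(s)\,ds=-\frac{\omega}{2}u^2+\frac{u^{p+1}}{p+1}-\frac{u^{q+1}}{q+1}$, and $$\Sigma(u)=2nF(u)-(n-2)uf(u)\qquad (u\ge 0).$$ Then there exist $0<B<C\le\infty$ (depending on $\omega,p,q$ and $n$) such that $\Sigma(u)<0$ for all $u\in(0,B)$ and $\Sigma(u)>0$ for all $u\in(B,C)$.
   Context: Throughout, $\omega_{p,q}$ is the threshold such that $F(u)>0$ for some $u>0$ if and only if $\omega<\omega_{p,q}$. *)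

theory Defs
  imports "HOL-Analysis.Analysis"
begin

definition omega_pq :: "real \<Rightarrow> real \<Rightarrow> real" where
  "omega_pq p q = (2 * (q - p)) / ((p + 1) * (q - 1)) *
     (((p - 1) * (q + 1)) / ((p + 1) * (q - 1))) powr ((p - 1) / (q - p))"

definition f_nl :: "real \<Rightarrow> real \<Rightarrow> real \<Rightarrow> real \<Rightarrow> real" where
  "f_nl \<omega> p q u = - \<omega> * u + u powr p - u powr q"

definition F_nl :: "real \<Rightarrow> real \<Rightarrow> real \<Rightarrow> real \<Rightarrow> real" where
  "F_nl \<omega> p q u = - (\<omega> / 2) * u\<^sup>2 + u powr (p + 1) / (p + 1) - u powr (q + 1) / (q + 1)"

definition Sigma_nl :: "nat \<Rightarrow> real \<Rightarrow> real \<Rightarrow> real \<Rightarrow> real \<Rightarrow> real" where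
  "Sigma_nl n \<omega> p q u = 2 * real n * F_nl \<omega> p q u - (real n - 2) * u * f_nl \<omega> p q u"

end

theory Submission
  imports Defs
begin

definition ca :: "nat \<Rightarrow> real \<Rightarrow> real" where
  "ca n p = 2*real n/(p+1) - (real n - 2)"

definition phi :: "nat \<Rightarrow> real \<Rightarrow> real \<Rightarrow> real \<Rightarrow> real \<Rightarrow> real" where
  "phi n \<omega> p q u = -2*\<omega> * u powr (1-p) + ca n p - ca n q * u powr (q-p)"

lemma algA: fixes N w u P Q p1 q1 :: real
  shows "2*N*(-(w/2)*u^2 + (u*P)/p1 - (u*Q)/q1) - (N-2)*u*(-w*u + P - Q) = -2*w*u^2 + (2*N/p1 - (N-2))*(u*P) - (2*N/q1-(N-2))*(u*Q)"
  by (simp add: diff_divide_distrib add_divide_distrib right_diff_distrib left_diff_distrib distrib_left distrib_right power2_eq_square)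

lemma algB: fixes w a b X Y Z :: real
  shows "X * (-2*w*Y + a - b*Z) = -2*w*(X*Y) + a*X - b*(X*Z)"
  by (simp add: algebra_simps)

lemma Sigma_phi:
  assumes "0 < u"
  shows "Sigma_nl n \<omega> p q u = u powr (p+1) * phi n \<omega> p q u"
proof -
  have e1: "u * u powr p = u powr (p+1)" using assms by (simp add: powr_add)
  have e2: "u * u powr q = u powr (q+1)" using assms by (simp add: powr_add)
  have e3: "u powr (p+1) * u powr (1-p) = u\<^sup>2"
    using assms by (simp add: powr_add[symmetric])
  have e4: "u powr (p+1) * u powr (q-p) = u powr (q+1)"
  proof -
    have "u powr (p+1) * u powr (q-p) = u powr ((p+1)+(q-p))" by (rule powr_add[symmetric])
    also have "(p+1)+(q-p) = q+1" by simp
    finally show ?thesis .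
  qed
  have "Sigma_nl n \<omega> p q u = -2*\<omega>*u\<^sup>2 + ca n p * (u * u powr p) - ca n q * (u * u powr q)"
    unfolding Sigma_nl_def F_nl_def f_nl_def e1[symmetric] e2[symmetric] ca_def
    by (rule algA)
  also have "\<dots> = u powr (p+1) * phi n \<omega> p q u"
    unfolding phi_def algB e3 e4 e1 e2 ..
  finally show ?thesis .
qed

lemma phi_deriv:
  assumes "0 < t"
  shows "(phi n \<omega> p q has_real_derivative
     t powr (-p) * (2*\<omega>*(p-1) - ca n q * (q-p) * t powr (q-1))) (at t)"
proof -
  have "(phi n \<omega> p q has_real_derivative
     -2*\<omega>*((1-p) * t powr (1-p-1)) - ca n q * ((q-p) * t powr (q-p-1))) (at t)"
    unfolding phi_def[abs_def]
    using assms by (auto intro!: derivative_eq_intros simp: algebra_simps)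
  moreover have "t powr (q-p-1) = t powr (-p) * t powr (q-1)"
  proof -
    have "t powr (-p) * t powr (q-1) = t powr (-p + (q-1))" by (rule powr_add[symmetric])
    also have "-p + (q-1) = q-p-1" by simp
    finally show ?thesis by simp
  qed
  moreover have "1-p-1 = -p" by simp
  ultimately show ?thesis by (simp add: algebra_simps)
qed

lemma phi_qc:
  assumes "1 < p" "p < q" "0 < \<omega>" "0 < x" "x < y" "y < z"
  shows "phi n \<omega> p q y > min (phi n \<omega> p q x) (phi n \<omega> p q z)"
proof (rule ccontr)
  assume "\<not> ?thesis"
  hence h1: "phi n \<omega> p q y \<le> phi n \<omega> p q x" and h2: "phi n \<omega> p q y \<le> phi n \<omega> p q z" by auto
  define D where "D t = t powr (-p) * (2*\<omega>*(p-1) - ca n q * (q-p) * t powr (q-1))" for t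
  have der: "\<And>t. 0 < t \<Longrightarrow> DERIV (phi n \<omega> p q) t :> D t"
    unfolding D_def by (rule phi_deriv)
  obtain s1 where s1: "x < s1" "s1 < y" "phi n \<omega> p q y - phi n \<omega> p q x = (y - x) * D s1"
    using MVT2[of x y "phi n \<omega> p q" D] der assms by force
  obtain s2 where s2: "y < s2" "s2 < z" "phi n \<omega> p q z - phi n \<omega> p q y = (z - y) * D s2"
    using MVT2[of y z "phi n \<omega> p q" D] der assms by force
  have "(y - x) * D s1 \<le> 0" using s1 h1 by linarith
  hence "D s1 \<le> 0" using assms by (simp add: mult_le_0_iff)
  moreover have "s1 powr (-p) > 0" using s1 assms by simp
  ultimately have k1: "2*\<omega>*(p-1) - ca n q * (q-p) * s1 powr (q-1) \<le> 0"
    unfolding D_def by (simp add: mult_le_0_iff)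
  have "(z - y) * D s2 \<ge> 0" using s2 h2 by linarith
  hence "D s2 \<ge> 0" using assms by (simp add: zero_le_mult_iff)
  moreover have "s2 powr (-p) > 0" using s2 assms by simp
  ultimately have k2: "2*\<omega>*(p-1) - ca n q * (q-p) * s2 powr (q-1) \<ge> 0"
    unfolding D_def by (simp add: zero_le_mult_iff)
  have pos: "2*\<omega>*(p-1) > 0" using assms by simp
  have lt: "s1 powr (q-1) < s2 powr (q-1)"
    using s1 s2 assms by (intro powr_less_mono2) auto
  have s1p: "s1 powr (q-1) > 0" using s1 assms by simp
  have "ca n q * ((q-p) * s1 powr (q-1)) > 0" using k1 pos by (simp add: mult.assoc)
  moreover have "(q-p) * s1 powr (q-1) > 0" using assms s1p by simp
  ultimately have cpos: "ca n q > 0" by (simp add: zero_less_mult_iff)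
  have "(q-p) * s1 powr (q-1) < (q-p) * s2 powr (q-1)" using lt assms by simp
  hence "ca n q * ((q-p) * s1 powr (q-1)) < ca n q * ((q-p) * s2 powr (q-1))"
    using cpos by simp
  thus False using k1 k2 by (simp add: mult.assoc)
qed

lemma L1: fixes A E c B D :: real shows "E \<noteq> 0 \<Longrightarrow> (A/E - c)*(B*E/D) = (A - c*E)*B/D"
  by (cases "D = 0") (simp_all add: field_simps)
lemma L2: fixes A P c G :: real shows "P \<noteq> 0 \<Longrightarrow> G \<noteq> 0 \<Longrightarrow> A/P - c = (A - c*P)*G/(P*G)"
  by (simp add: field_simps)
lemma algC: fixes p q N :: real assumes "1 < p" "p < q"
  shows "2 * N / (p + 1) - (N - 2) -
     (2 * N / (q + 1) - (N - 2)) *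
     ((p - 1) * (q + 1) / ((p + 1) * (q - 1))) =
     4 * (q - p) / ((p + 1) * (q - 1))"
proof -
  have nz: "p+1 \<noteq> 0" "q+1 \<noteq> 0" "q-1 \<noteq> 0" using assms by auto
  have "2 * N / (p + 1) - (N - 2) -
     (2 * N / (q + 1) - (N - 2)) *
     ((p - 1) * (q + 1) / ((p + 1) * (q - 1))) = 
     (2*N - (N-2)*(p+1))*(q-1)/((p+1)*(q-1)) - (2*N - (N-2)*(q+1))*(p-1)/((p+1)*(q-1))"
    using L1[OF nz(2)] L2[OF nz(1) nz(3)] by metis
  also have "\<dots> = ((2*N - (N-2)*(p+1))*(q-1) - (2*N - (N-2)*(q+1))*(p-1))/((p+1)*(q-1))"
    by (rule diff_divide_distrib[symmetric])
  also have "(2*N - (N-2)*(p+1))*(q-1) - (2*N - (N-2)*(q+1))*(p-1) = 4*(q-p)" by algebra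
  finally show ?thesis .
qed

lemma phi_star:
  assumes "1 < p" "p < q" "\<omega> < omega_pq p q"
  shows "\<exists>us>0. phi n \<omega> p q us > 0"
proof -
  define r where "r = (p-1)*(q+1)/((p+1)*(q-1))"
  have rpos: "r > 0" unfolding r_def using assms by (simp add: zero_less_divide_iff)
  define X where "X = r powr ((p-1)/(q-p))"
  have Xpos: "X > 0" unfolding X_def using rpos by simp
  define us where "us = r powr (1/(q-p))"
  have uspos: "us > 0" unfolding us_def using rpos by simp
  have e1: "us powr (1-p) = inverse X"
  proof -
    have "us powr (1-p) = r powr (1/(q-p) * (1-p))" unfolding us_def by (simp add: powr_powr)
    also have "1/(q-p) * (1-p) = - ((p-1)/(q-p))" by (metis minus_diff_eq minus_divide_left times_divide_eq_left mult_1)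
    finally show ?thesis unfolding X_def by (simp add: powr_minus)
  qed
  have e2: "us powr (q-p) = r"
  proof -
    have "us powr (q-p) = r powr (1/(q-p) * (q-p))" unfolding us_def by (simp add: powr_powr)
    also have "1/(q-p) * (q-p) = 1" using assms by simp
    finally show ?thesis using rpos by simp
  qed
  have e3: "ca n p - ca n q * r = 4*(q-p)/((p+1)*(q-1))"
    unfolding ca_def r_def using algC assms by blast
  have e4: "omega_pq p q = 2*(q-p)/((p+1)*(q-1)) * X"
    unfolding omega_pq_def X_def r_def by simp
  have "phi n \<omega> p q us = -2*\<omega> * inverse X + 4*(q-p)/((p+1)*(q-1))"
    unfolding phi_def e1 e2 using e3 by simp
  also have "\<dots> = 2 * (omega_pq p q - \<omega>) / X"
    unfolding e4 using Xpos by (simp add: field_simps)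
  also have "\<dots> > 0" using assms Xpos by simp
  finally show ?thesis using uspos by blast
qed

lemma phi_small:
  assumes "1 < p" "p < q" "0 < \<omega>"
  shows "\<exists>d>0. \<forall>u. 0 < u \<and> u < d \<longrightarrow> phi n \<omega> p q u < 0"
proof -
  define K where "K = \<bar>ca n p\<bar> + \<bar>ca n q\<bar> + 1"
  have Kpos: "K > 0" unfolding K_def by simp
  define d where "d = min 1 ((\<omega>/K) powr (1/(p-1)))"
  have dpos: "d > 0" unfolding d_def using assms Kpos by simp
  have "phi n \<omega> p q u < 0" if u: "0 < u" "u < d" for u
  proof -
    have u1: "u \<le> 1" using u unfolding d_def by simp
    have "u powr (p-1) < ((\<omega>/K) powr (1/(p-1))) powr (p-1)"
      using u assms unfolding d_def by (intro powr_less_mono2) auto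
    also have "\<dots> = \<omega>/K" using assms Kpos by (simp add: powr_powr)
    finally have A: "u powr (p-1) < \<omega>/K" .
    have Apos: "u powr (p-1) > 0" using u by simp
    have "u powr (q-1) \<le> u powr (p-1)" using u u1 assms by (intro powr_mono') auto
    moreover have "u powr (q-1) \<ge> 0" by simp
    ultimately have Bb: "\<bar>u powr (q-1)\<bar> \<le> u powr (p-1)" by simp
    have eq1: "u powr (p-1) * u powr (1-p) = 1"
      using u by (simp add: powr_add[symmetric])
    have eq2: "u powr (p-1) * u powr (q-p) = u powr (q-1)"
    proof -
      have "u powr (p-1) * u powr (q-p) = u powr ((p-1)+(q-p))" by (rule powr_add[symmetric])
      also have "(p-1)+(q-p) = q-1" by simp
      finally show ?thesis .
    qed
    have g: "u powr (p-1) * phi n \<omega> p q u = -2*\<omega> + ca n p * u powr (p-1) - ca n q * u powr (q-1)"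
      unfolding phi_def algB eq1 eq2 by simp
    have "ca n p * u powr (p-1) \<le> \<bar>ca n p\<bar> * u powr (p-1)"
      using Apos by (intro mult_right_mono) auto
    moreover have "- (ca n q * u powr (q-1)) \<le> \<bar>ca n q\<bar> * u powr (p-1)"
    proof -
      have "- (ca n q * u powr (q-1)) \<le> \<bar>ca n q * u powr (q-1)\<bar>" by simp
      also have "\<dots> = \<bar>ca n q\<bar> * \<bar>u powr (q-1)\<bar>" by (rule abs_mult)
      also have "\<dots> \<le> \<bar>ca n q\<bar> * u powr (p-1)" using Bb by (intro mult_left_mono) auto
      finally show ?thesis .
    qed
    moreover have "K * u powr (p-1) < \<omega>" using A Kpos by (simp add: field_simps)
    hence "\<bar>ca n p\<bar> * u powr (p-1) + \<bar>ca n q\<bar> * u powr (p-1) + u powr (p-1) < \<omega>"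
      unfolding K_def by (simp add: algebra_simps)
    ultimately have "u powr (p-1) * phi n \<omega> p q u < 0" unfolding g using assms Apos
      by linarith
    thus ?thesis using Apos by (simp add: mult_less_0_iff)
  qed
  thus ?thesis using dpos by blast
qed

theorem theorem1:
  fixes n :: nat and p q \<omega> :: real
  assumes "1 < p" and "p < q" and "0 < \<omega>" and "\<omega> < omega_pq p q"
  shows "\<exists>B::real. \<exists>C::ereal. 0 < B \<and> ereal B < C \<and>
           (\<forall>u. 0 < u \<and> u < B \<longrightarrow> Sigma_nl n \<omega> p q u < 0) \<and>
           (\<forall>u. B < u \<and> ereal u < C \<longrightarrow> Sigma_nl n \<omega> p q u > 0)"
proof -
  let ?f = "phi n \<omega> p q"
  obtain us where us: "us > 0" "?f us > 0" using phi_star[OF assms(1,2,4)] by blast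
  obtain d where d: "d > 0" "\<And>u. 0 < u \<Longrightarrow> u < d \<Longrightarrow> ?f u < 0"
    using phi_small[OF assms(1-3)] by blast
  define P where "P = {u. 0 < u \<and> ?f u > 0}"
  have usP: "us \<in> P" unfolding P_def using us by simp
  have Pd: "\<And>x. x \<in> P \<Longrightarrow> d \<le> x"
  proof -
    fix x assume "x \<in> P"
    hence "0 < x" "?f x > 0" unfolding P_def by auto
    thus "d \<le> x" using d by force
  qed
  have bdd: "bdd_below P" using Pd by (auto simp: bdd_below_def)
  define B where "B = Inf P"
  have Bd: "d \<le> B" unfolding B_def using usP Pd by (intro cInf_greatest) auto
  have Bus: "B \<le> us" unfolding B_def using usP bdd by (intro cInf_lower)
  have "isCont ?f us" using phi_deriv[OF us(1)] by (rule DERIV_isCont)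
  hence "(?f \<longlongrightarrow> ?f us) (at us)" by (simp add: isCont_def)
  hence "eventually (\<lambda>x. ?f x > 0) (at us)" using us(2) by (rule order_tendstoD(1))
  then obtain e where e: "e > 0" "\<And>x. x \<noteq> us \<Longrightarrow> dist x us < e \<Longrightarrow> ?f x > 0"
    unfolding eventually_at by auto
  define u' where "u' = us + e/2"
  have u'P: "u' \<in> P" unfolding P_def u'_def using e us by (auto simp: dist_real_def)
  define C where "C = Sup (ereal ` P)"
  have "ereal u' \<le> C" unfolding C_def using u'P by (simp add: Sup_upper)
  moreover have "ereal B < ereal u'" using Bus e unfolding u'_def by simp
  ultimately have BC: "ereal B < C" by (rule order_less_le_trans[rotated])
  have neg: "?f u < 0" if u: "0 < u" "u < B" for u
  proof -
    have "u \<notin> P" using u bdd unfolding B_def by (meson cInf_lower not_le)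
    hence le: "?f u \<le> 0" using u unfolding P_def by auto
    show ?thesis
    proof (rule ccontr)
      assume "\<not> ?f u < 0"
      hence z: "?f u = 0" using le by simp
      define y where "y = (u + B)/2"
      have uy: "u < y" and yus: "y < us" using u Bus unfolding y_def by auto
      have "?f y > min (?f u) (?f us)" by (rule phi_qc[OF assms(1,2,3) u(1) uy yus])
      hence "y \<in> P" using z us u \<open>u < y\<close> unfolding P_def by auto
      hence "B \<le> y" unfolding B_def using bdd by (rule cInf_lower)
      thus False using u unfolding y_def by simp
    qed
  qed
  have pos: "?f u > 0" if u: "B < u" "ereal u < C" for u
  proof -
    obtain z where z: "z \<in> P" "u < z" using u(2) unfolding C_def less_Sup_iff by auto
    obtain x where x: "x \<in> P" "x < u" using u(1) cInf_less_iff[of P u] usP bdd unfolding B_def by auto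
    have "x > 0" using x unfolding P_def by auto
    hence "?f u > min (?f x) (?f z)" by (rule phi_qc[OF assms(1,2,3) _ x(2) z(2)])
    thus ?thesis using x z unfolding P_def by auto
  qed
  show ?thesis
  proof (intro exI conjI allI impI)
    show "0 < B" using Bd d by simp
    show "ereal B < C" by (rule BC)
  next
    fix u assume u: "0 < u \<and> u < B"
    have "u powr (p+1) > 0" using u by simp
    thus "Sigma_nl n \<omega> p q u < 0" using Sigma_phi[of u] neg u by (simp add: mult_pos_neg)
  next
    fix u assume u: "B < u \<and> ereal u < C"
    have "0 < u" using u Bd d by simp
    hence "u powr (p+1) > 0" by simp
    thus "Sigma_nl n \<omega> p q u > 0" using Sigma_phi[of u] pos u \<open>0 < u\<close> by simp
  qed
qed

end
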